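(* Let $A\in\mathbb{R}^{m\times N}$ and $K\subseteq[N]=\{1,\dots,N\}$. Then the following are equivalent: (i) every vector $x_0\in\mathbb{R}^N_+$ with $\operatorname{supp}x_0\subseteq K$ is the unique solution of $(P_+)$ with $b=Ax_0$; (ii) $\mathbb{1}_K$ is the unique solution of $(P_+)$ with $b=A\mathbb{1}_K$.
   Context: For $b\in\mathbb{R}^m$, $(P_+)$ denotes the convex program $\min \|x\|_1$ subject to $Ax=b$ and $x\in\mathbb{R}_+^N$ (all entries nonnegative). "Unique solution" means unique minimizer. $\mathbb{1}_K\in\mathbb{R}^N$ denotes the vector with entries $1$ on $K$ and $0$ on $[N]\setminus K$. *)

theory Defs
  imports "HOL-Analysis.Analysis"
begin

definition l1norm :: "real^'n \<Rightarrow> real" where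
  "l1norm x = (\<Sum>i\<in>UNIV. \<bar>x $ i\<bar>)"

definition feasible_Pplus :: "real^'n^'m \<Rightarrow> real^'m \<Rightarrow> real^'n \<Rightarrow> bool" where
  "feasible_Pplus A b x \<longleftrightarrow> A *v x = b \<and> (\<forall>i. 0 \<le> x $ i)"

definition unique_sol_Pplus :: "real^'n^'m \<Rightarrow> real^'m \<Rightarrow> real^'n \<Rightarrow> bool" where
  "unique_sol_Pplus A b x \<longleftrightarrow> feasible_Pplus A b x \<and>
     (\<forall>z. feasible_Pplus A b z \<and> z \<noteq> x \<longrightarrow> l1norm x < l1norm z)"

definition supp :: "real^'n \<Rightarrow> 'n set" where
  "supp x = {i. x $ i \<noteq> 0}"

definition indic_vec :: "'n set \<Rightarrow> real^'n" where
  "indic_vec K = (\<chi> i. if i \<in> K then 1 else 0)"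

end

theory Submission
  imports Defs
begin

lemma l1_nonneg: "(\<forall>i. 0 \<le> x $ i) \<Longrightarrow> l1norm x = (\<Sum>i\<in>UNIV. x $ i)"
  unfolding l1norm_def by simp

theorem proposition1p1:
  fixes A :: "real^'n^'m" and K :: "'n set"
  shows "(\<forall>x0::real^'n. (\<forall>i. 0 \<le> x0 $ i) \<and> supp x0 \<subseteq> K \<longrightarrow>
            unique_sol_Pplus A (A *v x0) x0)
         \<longleftrightarrow> unique_sol_Pplus A (A *v indic_vec K) (indic_vec K)"
proof
  assume H: "\<forall>x0::real^'n. (\<forall>i. 0 \<le> x0 $ i) \<and> supp x0 \<subseteq> K \<longrightarrow>
            unique_sol_Pplus A (A *v x0) x0"
  show "unique_sol_Pplus A (A *v indic_vec K) (indic_vec K)"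
    by (rule H[rule_format]) (auto simp: indic_vec_def supp_def)
next
  assume U: "unique_sol_Pplus A (A *v indic_vec K) (indic_vec K)"
  let ?e = "indic_vec K"
  have e0: "\<forall>i. 0 \<le> ?e $ i" by (simp add: indic_vec_def)
  show "\<forall>x0::real^'n. (\<forall>i. 0 \<le> x0 $ i) \<and> supp x0 \<subseteq> K \<longrightarrow>
            unique_sol_Pplus A (A *v x0) x0"
  proof (intro allI impI)
    fix x0 :: "real^'n"
    assume a: "(\<forall>i. 0 \<le> x0 $ i) \<and> supp x0 \<subseteq> K"
    hence x0: "\<forall>i. 0 \<le> x0 $ i" and s: "\<And>i. i \<notin> K \<Longrightarrow> x0 $ i = 0"
      by (auto simp: supp_def)
    show "unique_sol_Pplus A (A *v x0) x0"
      unfolding unique_sol_Pplus_def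
    proof (intro conjI allI impI)
      show "feasible_Pplus A (A *v x0) x0" using x0 by (simp add: feasible_Pplus_def)
      fix z assume zz: "feasible_Pplus A (A *v x0) z \<and> z \<noteq> x0"
      hence z0: "\<forall>i. 0 \<le> z $ i" and Az: "A *v z = A *v x0" and zne: "z \<noteq> x0"
        by (auto simp: feasible_Pplus_def)
      define v where "v = z - x0"
      have Av: "A *v v = 0" using Az by (simp add: v_def matrix_vector_mult_diff_distrib)
      have vne: "v \<noteq> 0" using zne by (simp add: v_def)
      have voff: "\<And>i. i \<notin> K \<Longrightarrow> 0 \<le> v $ i" using s z0 by (simp add: v_def)
      define S where "S = (\<Sum>i\<in>UNIV. \<bar>v $ i\<bar>)"
      have S0: "0 \<le> S" unfolding S_def by (simp add: sum_nonneg)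
      have vS: "\<bar>v $ i\<bar> \<le> S" for i
        unfolding S_def by (rule member_le_sum) auto
      define t where "t = 1 / (1 + S)"
      have t0: "0 < t" using S0 by (simp add: t_def)
      have tv: "t * \<bar>v $ i\<bar> < 1" for i
      proof -
        have "t * \<bar>v $ i\<bar> \<le> t * S" using vS t0 by (simp add: mult_left_mono)
        also have "\<dots> < 1" using S0 by (simp add: t_def field_simps)
        finally show ?thesis .
      qed
      define w where "w = ?e + t *\<^sub>R v"
      have w0: "\<forall>i. 0 \<le> w $ i"
      proof
        fix i show "0 \<le> w $ i"
        proof (cases "i \<in> K")
          case True
          have "- (t * v $ i) \<le> t * \<bar>v $ i\<bar>" using t0
            by (metis abs_ge_minus_self abs_mult abs_of_pos)
          with tv[of i] True show ?thesis by (simp add: w_def indic_vec_def)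
        next
          case False
          thus ?thesis using voff[OF False] t0 by (simp add: w_def indic_vec_def)
        qed
      qed
      have Aw: "A *v w = A *v ?e"
        using Av by (simp add: w_def matrix_vector_right_distrib matrix_vector_mult_scaleR)
      have wne: "w \<noteq> ?e" using vne t0 by (simp add: w_def)
      have "l1norm ?e < l1norm w"
        using U Aw w0 wne by (auto simp: unique_sol_Pplus_def feasible_Pplus_def)
      hence "(\<Sum>i\<in>UNIV. ?e $ i) < (\<Sum>i\<in>UNIV. ?e $ i) + t * (\<Sum>i\<in>UNIV. v $ i)"
        using e0 w0 by (simp add: l1_nonneg w_def sum.distrib sum_distrib_left)
      hence "0 < (\<Sum>i\<in>UNIV. v $ i)" using t0 by (simp add: zero_less_mult_iff)
      hence "(\<Sum>i\<in>UNIV. x0 $ i) < (\<Sum>i\<in>UNIV. z $ i)"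
        by (simp add: v_def sum_subtractf)
      thus "l1norm x0 < l1norm z" using x0 z0 by (simp add: l1_nonneg)
    qed
  qed
qed

end
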